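(* Let $R$ be a commutative ring with unit element, $X$ a set, $F\subseteq R\langle X\rangle$ and $f\in(F)$. Let $Q=(V,E,X,s,t,l)$ be a labelled quiver such that $f$ is compatible with $Q$ and all elements of $F$ are uniformly compatible with $Q$. Then, for every $R$-linear category $\mathcal{C}$ and every representation $\mathcal{R}=(\mathcal{V},\varphi)$ of $Q$ in $\mathcal{C}$ that is consistent with the labelling $l$ and such that every realization of every element of $F$ with respect to $\mathcal{R}$ is zero, every realization of $f$ with respect to $\mathcal{R}$ is zero.
   Context: $R\langle X\rangle$ is the free algebra of noncommutative polynomials over $R$ in indeterminates $X$, with monomials the words in $\langle X\rangle$ (including the empty word $1$); $\operatorname{supp}(f)$ is the set of monomials with nonzero coefficient; $(F)$ is the two-sided ideal generated by $F$. A labelled quiver $Q=(V,E,X,s,t,l)$ has vertices $V$, edges $E$, source/target maps $s,t:E\to V$ and labelling $l:E\to X$. A nonempty path $p=e_n\cdots e_1$ (with $s(e_{i+1})=t(e_i)$) has label $l(e_n)\cdots l(e_1)$, source $s(e_1)$, target $t(e_n)$; each vertex $v$ has an empty path with label $1$ and source and target $v$. For a monomial $m$, $\sigma(m)=\{(s(p),t(p)) : p \text{ a path with } l(p)=m\}$; for a polynomial $f$, $\sigma(f)=\bigcap_{m\in\operatorname{supp}(f)}\sigma(m)$ (so $\sigma(0)=V\times V$). $f$ is compatible with $Q$ if $\sigma(f)\neq\emptyset$, and uniformly compatible if it is compatible and all $m\in\operatorname{supp}(f)$ have the same set $\sigma(m)$. $R\langle X\rangle_{v,w}=\{f : (v,w)\in\sigma(f)\}$.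 A category $\mathcal{C}$ is $R$-linear if every $\operatorname{Hom}_{\mathcal{C}}(A,B)$ is an $R$-module and composition is $R$-bilinear. A representation $(\mathcal{V},\varphi)$ of $Q$ in $\mathcal{C}$ assigns to each vertex $v$ an object $\mathcal{V}_v$ and to each edge $e$ a morphism $\varphi(e)\in\operatorname{Hom}_{\mathcal{C}}(\mathcal{V}_{s(e)},\mathcal{V}_{t(e)})$; it is consistent with $l$ if for any two nonempty paths $e_n\cdots e_1$ and $d_n\cdots d_1$ with the same source and target and equal labels, $\varphi(e_n)\cdots\varphi(e_1)=\varphi(d_n)\cdots\varphi(d_1)$. For a consistent representation and $v,w\in V$, $\varphi_{v,w}:R\langle X\rangle_{v,w}\to\operatorname{Hom}_{\mathcal{C}}(\mathcal{V}_v,\mathcal{V}_w)$ is the $R$-linear map with $\varphi_{v,w}(l(e_n\cdots e_1))=\varphi(e_n)\cdots\varphi(e_1)$ for nonempty paths $e_n\cdots e_1$ from $v$ to $w$, and $\varphi_{v,v}(1)=1_{\mathcal{V}_v}$. For $f\in R\langle X\rangle_{v,w}$, $\varphi_{v,w}(f)$ is called a realization of $f$; the realizations of $f$ are all $\varphi_{v,w}(f)$ with $(v,w)\in\sigma(f)$. *)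

theory Defs
  imports "HOL-Library.Poly_Mapping"
begin

text \<open>A noncommutative polynomial over R in indeterminates of type 'x is a finitely
supported function from words (lists over 'x; the empty list is the empty word 1)
to R. The monomial x_n ... x_1 is the list [x_n, ..., x_1]. supp f = Poly_Mapping.keys f.\<close>

type_synonym ('x, 'r) ncpoly = "'x list \<Rightarrow>\<^sub>0 'r"

definition nc_mult :: "('x, 'r::comm_ring_1) ncpoly \<Rightarrow> ('x, 'r) ncpoly \<Rightarrow> ('x, 'r) ncpoly" where
  "nc_mult f g = (\<Sum>m\<in>Poly_Mapping.keys f. \<Sum>n\<in>Poly_Mapping.keys g. Poly_Mapping.single (m @ n) (Poly_Mapping.lookup f m * Poly_Mapping.lookup g n))"

inductive_set nc_ideal :: "('x, 'r::comm_ring_1) ncpoly set \<Rightarrow> ('x, 'r) ncpoly set"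
  for F :: "('x, 'r) ncpoly set" where
  gen: "f \<in> F \<Longrightarrow> f \<in> nc_ideal F"
| zero: "0 \<in> nc_ideal F"
| add: "f \<in> nc_ideal F \<Longrightarrow> g \<in> nc_ideal F \<Longrightarrow> f + g \<in> nc_ideal F"
| lmult: "f \<in> nc_ideal F \<Longrightarrow> nc_mult a f \<in> nc_ideal F"
| rmult: "f \<in> nc_ideal F \<Longrightarrow> nc_mult f a \<in> nc_ideal F"

text \<open>A nonempty path e_n ... e_1 is the list [e_n, ..., e_1]; its label is map l,
its source s (last es), its target t (hd es).\<close>

definition quiver :: "'v set \<Rightarrow> 'e set \<Rightarrow> ('e \<Rightarrow> 'v) \<Rightarrow> ('e \<Rightarrow> 'v) \<Rightarrow> bool" where
  "quiver V E s t \<longleftrightarrow> s ` E \<subseteq> V \<and> t ` E \<subseteq> V"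

definition is_path :: "'e set \<Rightarrow> ('e \<Rightarrow> 'v) \<Rightarrow> ('e \<Rightarrow> 'v) \<Rightarrow> 'e list \<Rightarrow> bool" where
  "is_path E s t es \<longleftrightarrow> es \<noteq> [] \<and> set es \<subseteq> E \<and>
     (\<forall>i. Suc i < length es \<longrightarrow> s (es ! i) = t (es ! Suc i))"

definition sigma_mono :: "'v set \<Rightarrow> 'e set \<Rightarrow> ('e \<Rightarrow> 'v) \<Rightarrow> ('e \<Rightarrow> 'v) \<Rightarrow> ('e \<Rightarrow> 'x)
    \<Rightarrow> 'x list \<Rightarrow> ('v \<times> 'v) set" where
  "sigma_mono V E s t l m =
     {(v, w). (m = [] \<and> v = w \<and> v \<in> V) \<or>
              (\<exists>es. is_path E s t es \<and> map l es = m \<and> s (last es) = v \<and> t (hd es) = w)}"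

text \<open>sigma(f) = intersection over supp f (so sigma(0) = V x V).\<close>

definition sigma :: "'v set \<Rightarrow> 'e set \<Rightarrow> ('e \<Rightarrow> 'v) \<Rightarrow> ('e \<Rightarrow> 'v) \<Rightarrow> ('e \<Rightarrow> 'x)
    \<Rightarrow> ('x, 'r::comm_ring_1) ncpoly \<Rightarrow> ('v \<times> 'v) set" where
  "sigma V E s t l f = {p \<in> V \<times> V. \<forall>m\<in>Poly_Mapping.keys f. p \<in> sigma_mono V E s t l m}"

definition compatible where
  "compatible V E s t l f \<longleftrightarrow> sigma V E s t l f \<noteq> {}"

definition uniformly_compatible where
  "uniformly_compatible V E s t l f \<longleftrightarrow> compatible V E s t l f \<and>
     (\<forall>m\<in>Poly_Mapping.keys f. \<forall>m'\<in>Poly_Mapping.keys f. sigma_mono V E s t l m = sigma_mono V E s t l m')"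

text \<open>A category with objects of type 'o and morphisms of type 'm. lc_hom C A B is
Hom(A,B); lc_cmp C A B D g f is the composite g o f of f : A -> B and g : B -> D;
lc_idm C A is the identity of A; lc_add, lc_zero, lc_smult give the R-module
structure on Hom(A,B).\<close>

record ('o, 'm, 'r) lcat =
  lc_hom :: "'o \<Rightarrow> 'o \<Rightarrow> 'm set"
  lc_cmp :: "'o \<Rightarrow> 'o \<Rightarrow> 'o \<Rightarrow> 'm \<Rightarrow> 'm \<Rightarrow> 'm"
  lc_idm :: "'o \<Rightarrow> 'm"
  lc_add :: "'o \<Rightarrow> 'o \<Rightarrow> 'm \<Rightarrow> 'm \<Rightarrow> 'm"
  lc_zero :: "'o \<Rightarrow> 'o \<Rightarrow> 'm"
  lc_smult :: "'o \<Rightarrow> 'o \<Rightarrow> 'r \<Rightarrow> 'm \<Rightarrow> 'm"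

definition is_category :: "('o, 'm, 'r, 'z) lcat_scheme \<Rightarrow> bool" where
  "is_category C \<longleftrightarrow>
     (\<forall>A. lc_idm C A \<in> lc_hom C A A) \<and>
     (\<forall>A B D f g. f \<in> lc_hom C A B \<longrightarrow> g \<in> lc_hom C B D \<longrightarrow> lc_cmp C A B D g f \<in> lc_hom C A D) \<and>
     (\<forall>A B D G f g h. f \<in> lc_hom C A B \<longrightarrow> g \<in> lc_hom C B D \<longrightarrow> h \<in> lc_hom C D G \<longrightarrow>
        lc_cmp C A D G h (lc_cmp C A B D g f) = lc_cmp C A B G (lc_cmp C B D G h g) f) \<and>
     (\<forall>A B f. f \<in> lc_hom C A B \<longrightarrow> lc_cmp C A A B f (lc_idm C A) = f \<and> lc_cmp C A B B (lc_idm C B) f = f)"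

definition hom_modules :: "('o, 'm, 'r::comm_ring_1, 'z) lcat_scheme \<Rightarrow> bool" where
  "hom_modules C \<longleftrightarrow> (\<forall>A B. let H = lc_hom C A B; add = lc_add C A B; z = lc_zero C A B;
        sm = lc_smult C A B in
     z \<in> H \<and>
     (\<forall>f\<in>H. \<forall>g\<in>H. add f g \<in> H) \<and>
     (\<forall>r. \<forall>f\<in>H. sm r f \<in> H) \<and>
     (\<forall>f\<in>H. \<forall>g\<in>H. \<forall>h\<in>H. add (add f g) h = add f (add g h)) \<and>
     (\<forall>f\<in>H. \<forall>g\<in>H. add f g = add g f) \<and>
     (\<forall>f\<in>H. add z f = f) \<and>
     (\<forall>f\<in>H. \<exists>g\<in>H. add f g = z) \<and>
     (\<forall>r. \<forall>f\<in>H. \<forall>g\<in>H. sm r (add f g) = add (sm r f) (sm r g)) \<and>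
     (\<forall>r r'. \<forall>f\<in>H. sm (r + r') f = add (sm r f) (sm r' f)) \<and>
     (\<forall>r r'. \<forall>f\<in>H. sm (r * r') f = sm r (sm r' f)) \<and>
     (\<forall>f\<in>H. sm 1 f = f))"

definition bilinear_comp :: "('o, 'm, 'r::comm_ring_1, 'z) lcat_scheme \<Rightarrow> bool" where
  "bilinear_comp C \<longleftrightarrow>
     (\<forall>A B D f f' g g' r. f \<in> lc_hom C A B \<longrightarrow> f' \<in> lc_hom C A B \<longrightarrow>
        g \<in> lc_hom C B D \<longrightarrow> g' \<in> lc_hom C B D \<longrightarrow>
        lc_cmp C A B D (lc_add C B D g g') f = lc_add C A D (lc_cmp C A B D g f) (lc_cmp C A B D g' f) \<and>
        lc_cmp C A B D g (lc_add C A B f f') = lc_add C A D (lc_cmp C A B D g f) (lc_cmp C A B D g f') \<and>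
        lc_cmp C A B D (lc_smult C B D r g) f = lc_smult C A D r (lc_cmp C A B D g f) \<and>
        lc_cmp C A B D g (lc_smult C A B r f) = lc_smult C A D r (lc_cmp C A B D g f))"

definition R_linear_category :: "('o, 'm, 'r::comm_ring_1, 'z) lcat_scheme \<Rightarrow> bool" where
  "R_linear_category C \<longleftrightarrow> is_category C \<and> hom_modules C \<and> bilinear_comp C"

definition representation ::
  "('o, 'm, 'r, 'z) lcat_scheme \<Rightarrow> 'v set \<Rightarrow> 'e set \<Rightarrow> ('e \<Rightarrow> 'v) \<Rightarrow> ('e \<Rightarrow> 'v)
     \<Rightarrow> ('v \<Rightarrow> 'o) \<Rightarrow> ('e \<Rightarrow> 'm) \<Rightarrow> bool" where
  "representation C V E s t Vo phi \<longleftrightarrow> (\<forall>e\<in>E. phi e \<in> lc_hom C (Vo (s e)) (Vo (t e)))"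

fun path_mor :: "('o, 'm, 'r, 'z) lcat_scheme \<Rightarrow> ('e \<Rightarrow> 'v) \<Rightarrow> ('e \<Rightarrow> 'v)
     \<Rightarrow> ('v \<Rightarrow> 'o) \<Rightarrow> ('e \<Rightarrow> 'm) \<Rightarrow> 'e list \<Rightarrow> 'm" where
  "path_mor C s t Vo phi [] = undefined"
| "path_mor C s t Vo phi [e] = phi e"
| "path_mor C s t Vo phi (e # e' # es) =
     lc_cmp C (Vo (s (last (e' # es)))) (Vo (s e)) (Vo (t e)) (phi e) (path_mor C s t Vo phi (e' # es))"

definition consistent ::
  "('o, 'm, 'r, 'z) lcat_scheme \<Rightarrow> 'e set \<Rightarrow> ('e \<Rightarrow> 'v) \<Rightarrow> ('e \<Rightarrow> 'v) \<Rightarrow> ('e \<Rightarrow> 'x)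
     \<Rightarrow> ('v \<Rightarrow> 'o) \<Rightarrow> ('e \<Rightarrow> 'm) \<Rightarrow> bool" where
  "consistent C E s t l Vo phi \<longleftrightarrow>
     (\<forall>es ds. is_path E s t es \<longrightarrow> is_path E s t ds \<longrightarrow>
        s (last es) = s (last ds) \<longrightarrow> t (hd es) = t (hd ds) \<longrightarrow> map l es = map l ds \<longrightarrow>
        path_mor C s t Vo phi es = path_mor C s t Vo phi ds)"

definition mono_real ::
  "('o, 'm, 'r, 'z) lcat_scheme \<Rightarrow> 'e set \<Rightarrow> ('e \<Rightarrow> 'v) \<Rightarrow> ('e \<Rightarrow> 'v) \<Rightarrow> ('e \<Rightarrow> 'x)
     \<Rightarrow> ('v \<Rightarrow> 'o) \<Rightarrow> ('e \<Rightarrow> 'm) \<Rightarrow> 'v \<Rightarrow> 'v \<Rightarrow> 'x list \<Rightarrow> 'm" where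
  "mono_real C E s t l Vo phi v w m =
     (if m = [] then lc_idm C (Vo v)
      else path_mor C s t Vo phi
             (SOME es. is_path E s t es \<and> map l es = m \<and> s (last es) = v \<and> t (hd es) = w))"

text \<open>Finite sums in Hom(A,B) (independent of the enumeration in an R-module).\<close>

definition hom_sum :: "('o, 'm, 'r, 'z) lcat_scheme \<Rightarrow> 'o \<Rightarrow> 'o \<Rightarrow> ('a \<Rightarrow> 'm) \<Rightarrow> 'a set \<Rightarrow> 'm" where
  "hom_sum C A B g S =
     foldr (\<lambda>x acc. lc_add C A B (g x) acc) (SOME xs. distinct xs \<and> set xs = S) (lc_zero C A B)"

definition realization ::
  "('o, 'm, 'r::comm_ring_1, 'z) lcat_scheme \<Rightarrow> 'e set \<Rightarrow> ('e \<Rightarrow> 'v) \<Rightarrow> ('e \<Rightarrow> 'v) \<Rightarrow> ('e \<Rightarrow> 'x)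
     \<Rightarrow> ('v \<Rightarrow> 'o) \<Rightarrow> ('e \<Rightarrow> 'm) \<Rightarrow> 'v \<Rightarrow> 'v \<Rightarrow> ('x, 'r) ncpoly \<Rightarrow> 'm" where
  "realization C E s t l Vo phi v w f =
     hom_sum C (Vo v) (Vo w)
       (\<lambda>m. lc_smult C (Vo v) (Vo w) (Poly_Mapping.lookup f m) (mono_real C E s t l Vo phi v w m)) (Poly_Mapping.keys f)"

definition realizations_vanish where
  "realizations_vanish C V E s t l Vo phi f \<longleftrightarrow>
     (\<forall>(v, w) \<in> sigma V E s t l f. realization C E s t l Vo phi v w f = lc_zero C (Vo v) (Vo w))"

end

theory Submission
  imports Defs "HOL-Algebra.FiniteProduct"
begin

definition hg :: "('o, 'm, 'r, 'z) lcat_scheme \<Rightarrow> 'o \<Rightarrow> 'o \<Rightarrow> 'm monoid" where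
  "hg C A B = \<lparr>carrier = lc_hom C A B, monoid.mult = lc_add C A B, one = lc_zero C A B\<rparr>"

lemma hg_simps[simp]: "carrier (hg C A B) = lc_hom C A B" "monoid.mult (hg C A B) = lc_add C A B"
  "one (hg C A B) = lc_zero C A B"
  by (simp_all add: hg_def)

lemma hm:
  assumes "R_linear_category C"
  shows "lc_zero C A B \<in> lc_hom C A B"
   and "\<And>f g. f \<in> lc_hom C A B \<Longrightarrow> g \<in> lc_hom C A B \<Longrightarrow> lc_add C A B f g \<in> lc_hom C A B"
   and "\<And>r f. f \<in> lc_hom C A B \<Longrightarrow> lc_smult C A B r f \<in> lc_hom C A B"
   and "\<And>f g h. f \<in> lc_hom C A B \<Longrightarrow> g \<in> lc_hom C A B \<Longrightarrow> h \<in> lc_hom C A B \<Longrightarrow>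
          lc_add C A B (lc_add C A B f g) h = lc_add C A B f (lc_add C A B g h)"
   and "\<And>f g. f \<in> lc_hom C A B \<Longrightarrow> g \<in> lc_hom C A B \<Longrightarrow> lc_add C A B f g = lc_add C A B g f"
   and "\<And>f. f \<in> lc_hom C A B \<Longrightarrow> lc_add C A B (lc_zero C A B) f = f"
   and "\<And>f. f \<in> lc_hom C A B \<Longrightarrow> \<exists>g\<in>lc_hom C A B. lc_add C A B f g = lc_zero C A B"
   and "\<And>r f g. f \<in> lc_hom C A B \<Longrightarrow> g \<in> lc_hom C A B \<Longrightarrow>
          lc_smult C A B r (lc_add C A B f g) = lc_add C A B (lc_smult C A B r f) (lc_smult C A B r g)"
   and "\<And>r r' f. f \<in> lc_hom C A B \<Longrightarrow>
          lc_smult C A B (r + r') f = lc_add C A B (lc_smult C A B r f) (lc_smult C A B r' f)"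
   and "\<And>r r' f. f \<in> lc_hom C A B \<Longrightarrow>
          lc_smult C A B (r * r') f = lc_smult C A B r (lc_smult C A B r' f)"
proof -
  have H: "hom_modules C" using assms unfolding R_linear_category_def by simp
  note H' = H[unfolded hom_modules_def Let_def, rule_format, of A B]
  show "lc_zero C A B \<in> lc_hom C A B" using H' by (elim conjE)
  show "\<And>f g. f \<in> lc_hom C A B \<Longrightarrow> g \<in> lc_hom C A B \<Longrightarrow> lc_add C A B f g \<in> lc_hom C A B" using H' by (elim conjE) blast
  show "\<And>r f. f \<in> lc_hom C A B \<Longrightarrow> lc_smult C A B r f \<in> lc_hom C A B" using H' by (elim conjE) blast
  show "\<And>f g h. f \<in> lc_hom C A B \<Longrightarrow> g \<in> lc_hom C A B \<Longrightarrow> h \<in> lc_hom C A B \<Longrightarrow>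
          lc_add C A B (lc_add C A B f g) h = lc_add C A B f (lc_add C A B g h)" using H' by (elim conjE) blast
  show "\<And>f g. f \<in> lc_hom C A B \<Longrightarrow> g \<in> lc_hom C A B \<Longrightarrow> lc_add C A B f g = lc_add C A B g f" using H' by (elim conjE) blast
  show "\<And>f. f \<in> lc_hom C A B \<Longrightarrow> lc_add C A B (lc_zero C A B) f = f" using H' by (elim conjE) blast
  show "\<And>f. f \<in> lc_hom C A B \<Longrightarrow> \<exists>g\<in>lc_hom C A B. lc_add C A B f g = lc_zero C A B" using H' by (elim conjE) blast
  show "\<And>r f g. f \<in> lc_hom C A B \<Longrightarrow> g \<in> lc_hom C A B \<Longrightarrow>
          lc_smult C A B r (lc_add C A B f g) = lc_add C A B (lc_smult C A B r f) (lc_smult C A B r g)" using H' by (elim conjE) blast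
  show "\<And>r r' f. f \<in> lc_hom C A B \<Longrightarrow>
          lc_smult C A B (r + r') f = lc_add C A B (lc_smult C A B r f) (lc_smult C A B r' f)" using H' by (elim conjE) blast
  show "\<And>r r' f. f \<in> lc_hom C A B \<Longrightarrow>
          lc_smult C A B (r * r') f = lc_smult C A B r (lc_smult C A B r' f)" using H' by (elim conjE) blast
qed

lemma hg_group: assumes "R_linear_category C" shows "comm_group (hg C A B)"
proof (rule comm_groupI, simp_all)
  fix x assume x: "x \<in> lc_hom C A B"
  obtain g where "g \<in> lc_hom C A B" "lc_add C A B x g = lc_zero C A B" using hm(7)[OF assms x] by blast
  then show "\<exists>y\<in>lc_hom C A B. lc_add C A B y x = lc_zero C A B" using hm(5)[OF assms] x by metis
qed (use hm[OF assms] in auto)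

lemma sm_closed: "R_linear_category C \<Longrightarrow> x \<in> lc_hom C A B \<Longrightarrow> lc_smult C A B r x \<in> lc_hom C A B"
  by (rule hm(3))
lemma add_closed: "R_linear_category C \<Longrightarrow> x \<in> lc_hom C A B \<Longrightarrow> y \<in> lc_hom C A B \<Longrightarrow> lc_add C A B x y \<in> lc_hom C A B"
  by (rule hm(2))
lemma zero_closed: "R_linear_category C \<Longrightarrow> lc_zero C A B \<in> lc_hom C A B"
  by (rule hm(1))
lemma sm_add: "R_linear_category C \<Longrightarrow> x \<in> lc_hom C A B \<Longrightarrow> y \<in> lc_hom C A B \<Longrightarrow>
   lc_smult C A B r (lc_add C A B x y) = lc_add C A B (lc_smult C A B r x) (lc_smult C A B r y)"
  by (rule hm(8))
lemma add_sm: "R_linear_category C \<Longrightarrow> x \<in> lc_hom C A B \<Longrightarrow>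
   lc_smult C A B (r + r') x = lc_add C A B (lc_smult C A B r x) (lc_smult C A B r' x)"
  by (rule hm(9))
lemma mult_sm: "R_linear_category C \<Longrightarrow> x \<in> lc_hom C A B \<Longrightarrow>
   lc_smult C A B (r * r') x = lc_smult C A B r (lc_smult C A B r' x)"
  by (rule hm(10))

lemma idem_zero: assumes "R_linear_category C" "y \<in> lc_hom C A B" "lc_add C A B y y = y"
  shows "y = lc_zero C A B"
proof -
  interpret comm_group "hg C A B" by (rule hg_group[OF assms(1)])
  show ?thesis using assms(2,3) l_cancel_one[of y y] by simp
qed

lemma sm_zero: assumes "R_linear_category C"
  shows "lc_smult C A B r (lc_zero C A B) = lc_zero C A B"
proof -
  interpret comm_group "hg C A B" by (rule hg_group[OF assms(1)])
  have z: "lc_zero C A B \<in> lc_hom C A B" using zero_closed[OF assms] .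
  show ?thesis
    apply (rule idem_zero[OF assms sm_closed[OF assms z]])
    using sm_add[OF assms z z, of r] hm(6)[OF assms z] by simp
qed

lemma zero_sm: assumes "R_linear_category C" "x \<in> lc_hom C A B"
  shows "lc_smult C A B 0 x = lc_zero C A B"
  apply (rule idem_zero[OF assms(1) sm_closed[OF assms]])
  using add_sm[OF assms, of 0 0] by simp

lemma hom_sum_finprod:
  assumes "R_linear_category C" "finite S" "\<And>x. x \<in> S \<Longrightarrow> g x \<in> lc_hom C A B"
  shows "hom_sum C A B g S = finprod (hg C A B) g S"
proof -
  interpret comm_group "hg C A B" by (rule hg_group[OF assms(1)])
  obtain xs where "distinct xs \<and> set xs = S" using finite_distinct_list[OF assms(2)] by blast
  then have xs: "distinct (SOME xs. distinct xs \<and> set xs = S) \<and> set (SOME xs. distinct xs \<and> set xs = S) = S"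
    by (rule someI)
  define ys where "ys = (SOME xs. distinct xs \<and> set xs = S)"
  have "distinct ys" "set ys \<subseteq> S" using xs ys_def by auto
  then have "foldr (\<lambda>x acc. lc_add C A B (g x) acc) ys (lc_zero C A B) = finprod (hg C A B) g (set ys)"
  proof (induction ys)
    case Nil then show ?case by simp
  next
    case (Cons a ys)
    have "finprod (hg C A B) g (insert a (set ys)) = g a \<otimes>\<^bsub>hg C A B\<^esub> finprod (hg C A B) g (set ys)"
      using Cons.prems assms(3) by (intro finprod_insert) (auto simp: Pi_def)
    then show ?case using Cons by auto
  qed
  then show ?thesis unfolding hom_sum_def ys_def[symmetric] using xs ys_def by simp
qed

lemma finprod_additive:
  assumes "comm_group G" "comm_group G'" "\<And>x. x \<in> carrier G \<Longrightarrow> L x \<in> carrier G'"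
    "\<And>x y. x \<in> carrier G \<Longrightarrow> y \<in> carrier G \<Longrightarrow> L (x \<otimes>\<^bsub>G\<^esub> y) = L x \<otimes>\<^bsub>G'\<^esub> L y"
    "g \<in> S \<rightarrow> carrier G"
  shows "L (finprod G g S) = finprod G' (\<lambda>x. L (g x)) S"
proof -
  interpret G: comm_group G by fact
  interpret G': comm_group G' by fact
  have L1: "L \<one>\<^bsub>G\<^esub> = \<one>\<^bsub>G'\<^esub>"
    using assms(4)[of "\<one>\<^bsub>G\<^esub>" "\<one>\<^bsub>G\<^esub>"] assms(3)[of "\<one>\<^bsub>G\<^esub>"] by simp
  show ?thesis using assms(5)
  proof (induction S rule: infinite_finite_induct)
    case (infinite A) then show ?case using L1 by simp
  next
    case empty then show ?case using L1 by simp
  next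
    case (insert a A)
    then show ?case using assms(3,4) by (auto simp: Pi_def G.finprod_closed)
  qed
qed

lemma cat_facts:
  assumes "R_linear_category C"
  shows cmp_closed: "\<And>A B D f g. f \<in> lc_hom C A B \<Longrightarrow> g \<in> lc_hom C B D \<Longrightarrow> lc_cmp C A B D g f \<in> lc_hom C A D"
    and idm_closed: "\<And>A. lc_idm C A \<in> lc_hom C A A"
    and cmp_assoc: "\<And>A B D G f g h. f \<in> lc_hom C A B \<Longrightarrow> g \<in> lc_hom C B D \<Longrightarrow> h \<in> lc_hom C D G \<Longrightarrow>
        lc_cmp C A D G h (lc_cmp C A B D g f) = lc_cmp C A B G (lc_cmp C B D G h g) f"
    and id_r: "\<And>A B f. f \<in> lc_hom C A B \<Longrightarrow> lc_cmp C A A B f (lc_idm C A) = f"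
    and id_l: "\<And>A B f. f \<in> lc_hom C A B \<Longrightarrow> lc_cmp C A B B (lc_idm C B) f = f"
    and cmp_add_l: "\<And>A B D f g g'. f \<in> lc_hom C A B \<Longrightarrow> g \<in> lc_hom C B D \<Longrightarrow> g' \<in> lc_hom C B D \<Longrightarrow>
        lc_cmp C A B D (lc_add C B D g g') f = lc_add C A D (lc_cmp C A B D g f) (lc_cmp C A B D g' f)"
    and cmp_add_r: "\<And>A B D f f' g. f \<in> lc_hom C A B \<Longrightarrow> f' \<in> lc_hom C A B \<Longrightarrow> g \<in> lc_hom C B D \<Longrightarrow>
        lc_cmp C A B D g (lc_add C A B f f') = lc_add C A D (lc_cmp C A B D g f) (lc_cmp C A B D g f')"
    and cmp_sm_l: "\<And>A B D f g r. f \<in> lc_hom C A B \<Longrightarrow> g \<in> lc_hom C B D \<Longrightarrow>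
        lc_cmp C A B D (lc_smult C B D r g) f = lc_smult C A D r (lc_cmp C A B D g f)"
    and cmp_sm_r: "\<And>A B D f g r. f \<in> lc_hom C A B \<Longrightarrow> g \<in> lc_hom C B D \<Longrightarrow>
        lc_cmp C A B D g (lc_smult C A B r f) = lc_smult C A D r (lc_cmp C A B D g f)"
proof -
  have c: "is_category C" and b: "bilinear_comp C" using assms unfolding R_linear_category_def by auto
  note c' = c[unfolded is_category_def]
  note b' = b[unfolded bilinear_comp_def, rule_format]
  show "\<And>A B D f g. f \<in> lc_hom C A B \<Longrightarrow> g \<in> lc_hom C B D \<Longrightarrow> lc_cmp C A B D g f \<in> lc_hom C A D"
    using c' by blast
  show "\<And>A. lc_idm C A \<in> lc_hom C A A" using c' by blast
  show "\<And>A B D G f g h. f \<in> lc_hom C A B \<Longrightarrow> g \<in> lc_hom C B D \<Longrightarrow> h \<in> lc_hom C D G \<Longrightarrow>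
        lc_cmp C A D G h (lc_cmp C A B D g f) = lc_cmp C A B G (lc_cmp C B D G h g) f" using c' by blast
  show "\<And>A B f. f \<in> lc_hom C A B \<Longrightarrow> lc_cmp C A A B f (lc_idm C A) = f" using c' by blast
  show "\<And>A B f. f \<in> lc_hom C A B \<Longrightarrow> lc_cmp C A B B (lc_idm C B) f = f" using c' by blast
  show "\<And>A B D f g g'. f \<in> lc_hom C A B \<Longrightarrow> g \<in> lc_hom C B D \<Longrightarrow> g' \<in> lc_hom C B D \<Longrightarrow>
        lc_cmp C A B D (lc_add C B D g g') f = lc_add C A D (lc_cmp C A B D g f) (lc_cmp C A B D g' f)"
    using b' by blast
  show "\<And>A B D f f' g. f \<in> lc_hom C A B \<Longrightarrow> f' \<in> lc_hom C A B \<Longrightarrow> g \<in> lc_hom C B D \<Longrightarrow>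
        lc_cmp C A B D g (lc_add C A B f f') = lc_add C A D (lc_cmp C A B D g f) (lc_cmp C A B D g f')"
    using b' by blast
  show "\<And>A B D f g r. f \<in> lc_hom C A B \<Longrightarrow> g \<in> lc_hom C B D \<Longrightarrow>
        lc_cmp C A B D (lc_smult C B D r g) f = lc_smult C A D r (lc_cmp C A B D g f)"
    using b' by blast
  show "\<And>A B D f g r. f \<in> lc_hom C A B \<Longrightarrow> g \<in> lc_hom C B D \<Longrightarrow>
        lc_cmp C A B D g (lc_smult C A B r f) = lc_smult C A D r (lc_cmp C A B D g f)"
    using b' by blast
qed

lemma is_path_single[simp]: "is_path E s t [e] \<longleftrightarrow> e \<in> E"
  by (auto simp: is_path_def)

lemma is_path_Cons2: "is_path E s t (e # e' # es) \<longleftrightarrow> e \<in> E \<and> s e = t e' \<and> is_path E s t (e' # es)"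
proof
  assume "is_path E s t (e # e' # es)"
  then show "e \<in> E \<and> s e = t e' \<and> is_path E s t (e' # es)"
    unfolding is_path_def by (auto dest: spec[of _ 0] spec[of _ "Suc i" for i])
next
  assume a: "e \<in> E \<and> s e = t e' \<and> is_path E s t (e' # es)"
  show "is_path E s t (e # e' # es)" unfolding is_path_def
  proof (intro conjI allI impI)
    fix i assume "Suc i < length (e # e' # es)"
    then show "s ((e # e' # es) ! i) = t ((e # e' # es) ! Suc i)"
      using a unfolding is_path_def by (cases i) auto
  qed (use a in \<open>auto simp: is_path_def\<close>)
qed

lemma is_path_append:
  "is_path E s t es \<Longrightarrow> is_path E s t ds \<Longrightarrow> s (last es) = t (hd ds) \<Longrightarrow> is_path E s t (es @ ds)"
proof (induction es rule: induct_list012)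
  case 1 then show ?case by (simp add: is_path_def)
next
  case (2 x) then show ?case by (cases ds) (auto simp: is_path_Cons2)
next
  case (3 x y zs) then show ?case by (auto simp: is_path_Cons2)
qed

lemma is_path_split:
  "is_path E s t (es @ ds) \<Longrightarrow> es \<noteq> [] \<Longrightarrow> ds \<noteq> [] \<Longrightarrow>
   is_path E s t es \<and> is_path E s t ds \<and> s (last es) = t (hd ds)"
proof (induction es rule: induct_list012)
  case 1 then show ?case by simp
next
  case (2 x) then show ?case by (cases ds) (auto simp: is_path_Cons2)
next
  case (3 x y zs) then show ?case by (auto simp: is_path_Cons2)
qed

locale qrep =
  fixes C :: "('o, 'm, 'r::comm_ring_1) lcat" and V :: "'v set" and E :: "'e set"
    and s t :: "'e \<Rightarrow> 'v" and l :: "'e \<Rightarrow> 'x" and Vo :: "'v \<Rightarrow> 'o" and phi :: "'e \<Rightarrow> 'm"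
  assumes RLC: "R_linear_category C" and Q: "quiver V E s t"
    and REP: "representation C V E s t Vo phi" and CON: "consistent C E s t l Vo phi"
begin

abbreviation "pm \<equiv> path_mor C s t Vo phi"
abbreviation "sg \<equiv> sigma_mono V E s t l"
abbreviation "mr \<equiv> mono_real C E s t l Vo phi"

lemma path_hom: "is_path E s t es \<Longrightarrow> pm es \<in> lc_hom C (Vo (s (last es))) (Vo (t (hd es)))"
proof (induction es rule: induct_list012)
  case 1 then show ?case by (simp add: is_path_def)
next
  case (2 x) then show ?case using REP by (simp add: representation_def)
next
  case (3 x y zs)
  then have p: "is_path E s t (y # zs)" "x \<in> E" "s x = t y" by (auto simp: is_path_Cons2)
  have h1: "pm (y # zs) \<in> lc_hom C (Vo (s (last (y # zs)))) (Vo (s x))"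
    using 3(2)[OF p(1)] p(3) by simp
  have h2: "phi x \<in> lc_hom C (Vo (s x)) (Vo (t x))" using REP p(2) unfolding representation_def by blast
  have "pm (x # y # zs) = lc_cmp C (Vo (s (last (y # zs)))) (Vo (s x)) (Vo (t x)) (phi x) (pm (y # zs))"
    by simp
  then show ?case using cmp_closed[OF RLC h1 h2] by simp
qed

lemma path_mor_append:
  "is_path E s t (es @ ds) \<Longrightarrow> es \<noteq> [] \<Longrightarrow> ds \<noteq> [] \<Longrightarrow>
   pm (es @ ds) = lc_cmp C (Vo (s (last ds))) (Vo (s (last es))) (Vo (t (hd es))) (pm es) (pm ds)"
proof (induction es rule: induct_list012)
  case 1 then show ?case by simp
next
  case (2 x) then show ?case by (cases ds) auto
next
  case (3 x y zs)
  have p: "is_path E s t (y # zs @ ds)" "x \<in> E" "s x = t y" using 3(3) by (auto simp: is_path_Cons2)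
  have sp: "is_path E s t (y # zs)" "is_path E s t ds" "s (last (y # zs)) = t (hd ds)"
    using is_path_split[of E s t "y # zs" ds] p 3 by auto
  have IH: "pm ((y # zs) @ ds) = lc_cmp C (Vo (s (last ds))) (Vo (s (last (y # zs)))) (Vo (t y)) (pm (y # zs)) (pm ds)"
    using 3(2)[of] p 3 by simp
  have h1: "pm ds \<in> lc_hom C (Vo (s (last ds))) (Vo (s (last (y # zs))))"
    using path_hom[OF sp(2)] sp(3) by simp
  have h2: "pm (y # zs) \<in> lc_hom C (Vo (s (last (y # zs)))) (Vo (s x))"
    using path_hom[OF sp(1)] p by simp
  have h3: "phi x \<in> lc_hom C (Vo (s x)) (Vo (t x))" using REP p(2) unfolding representation_def by blast
  have "pm ((x # y # zs) @ ds) = lc_cmp C (Vo (s (last ds))) (Vo (s x)) (Vo (t x)) (phi x) (pm ((y # zs) @ ds))"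
    using 3(5) by simp
  also have "\<dots> = lc_cmp C (Vo (s (last ds))) (Vo (s (last (y # zs)))) (Vo (t x))
      (lc_cmp C (Vo (s (last (y # zs)))) (Vo (s x)) (Vo (t x)) (phi x) (pm (y # zs))) (pm ds)"
    unfolding IH using cmp_assoc[OF RLC h1 h2 h3] p by simp
  also have "\<dots> = lc_cmp C (Vo (s (last ds))) (Vo (s (last (x # y # zs)))) (Vo (t (hd (x # y # zs))))
      (pm (x # y # zs)) (pm ds)" by simp
  finally show ?case .
qed

lemma sg_V: assumes "(v, w) \<in> sg m" shows "v \<in> V \<and> w \<in> V"
proof -
  have "(m = [] \<and> v = w \<and> v \<in> V) \<or>
     (\<exists>es. is_path E s t es \<and> map l es = m \<and> s (last es) = v \<and> t (hd es) = w)"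
    using assms unfolding sigma_mono_def by simp
  then show ?thesis
  proof
    assume "\<exists>es. is_path E s t es \<and> map l es = m \<and> s (last es) = v \<and> t (hd es) = w"
    then obtain es where es: "es \<noteq> []" "set es \<subseteq> E" "s (last es) = v" "t (hd es) = w"
      unfolding is_path_def by blast
    have "last es \<in> E" "hd es \<in> E" using es last_in_set hd_in_set by blast+
    then show ?thesis using es Q unfolding quiver_def by blast
  qed auto
qed

lemma mr_path: "is_path E s t es \<Longrightarrow> map l es = m \<Longrightarrow> s (last es) = v \<Longrightarrow> t (hd es) = w \<Longrightarrow>
  mr v w m = pm es"
proof -
  assume a: "is_path E s t es" "map l es = m" "s (last es) = v" "t (hd es) = w"
  let ?P = "\<lambda>es. is_path E s t es \<and> map l es = m \<and> s (last es) = v \<and> t (hd es) = w"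
  have "?P (SOME es. ?P es)" using a by (intro someI[of ?P es]) auto
  moreover have "m \<noteq> []" using a by (auto simp: is_path_def)
  moreover have "pm (SOME es. ?P es) = pm es"
    using CON[unfolded consistent_def, rule_format, of "SOME es. ?P es" es] calculation(1) a by auto
  ultimately show ?thesis unfolding mono_real_def by simp
qed

lemma mr_hom: assumes "(v, w) \<in> sg m" shows "mr v w m \<in> lc_hom C (Vo v) (Vo w)"
proof -
  have "(m = [] \<and> v = w \<and> v \<in> V) \<or>
     (\<exists>es. is_path E s t es \<and> map l es = m \<and> s (last es) = v \<and> t (hd es) = w)"
    using assms unfolding sigma_mono_def by simp
  then show ?thesis
  proof
    assume "\<exists>es. is_path E s t es \<and> map l es = m \<and> s (last es) = v \<and> t (hd es) = w"
    then obtain es where es: "is_path E s t es" "map l es = m" "s (last es) = v" "t (hd es) = w"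
      by blast
    show ?thesis using mr_path[OF es] path_hom[OF es(1)] es by simp
  qed (use idm_closed[OF RLC] in \<open>auto simp: mono_real_def\<close>)
qed

lemma sg_comp:
  assumes "(v, u) \<in> sg n" "(u, w) \<in> sg m"
  shows "(v, w) \<in> sg (m @ n) \<and>
    mr v w (m @ n) = lc_cmp C (Vo v) (Vo u) (Vo w) (mr u w m) (mr v u n)"
proof (cases "m = []")
  case True
  then have "u = w" using assms(2) by (auto simp: sigma_mono_def is_path_def)
  then show ?thesis using True assms mr_hom id_l[OF RLC] by (simp add: mono_real_def)
next
  case m: False
  show ?thesis
  proof (cases "n = []")
    case True
    then have "u = v" using assms(1) by (auto simp: sigma_mono_def is_path_def)
    then show ?thesis using True assms mr_hom id_r[OF RLC] by (simp add: mono_real_def)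
  next
    case n: False
    obtain es where es: "is_path E s t es" "map l es = m" "s (last es) = u" "t (hd es) = w"
      using assms(2) m by (auto simp: sigma_mono_def)
    obtain ds where ds: "is_path E s t ds" "map l ds = n" "s (last ds) = v" "t (hd ds) = u"
      using assms(1) n by (auto simp: sigma_mono_def)
    have ne: "es \<noteq> []" "ds \<noteq> []" using es ds by (auto simp: is_path_def)
    have p: "is_path E s t (es @ ds)" using is_path_append[OF es(1) ds(1)] es(3) ds(4) by simp
    have "(v, w) \<in> sg (m @ n)" unfolding sigma_mono_def using p es ds ne by auto
    moreover have "mr v w (m @ n) = pm (es @ ds)" using mr_path[OF p] es ds ne by auto
    moreover have "mr u w m = pm es" "mr v u n = pm ds" using mr_path es ds by auto
    ultimately show ?thesis using path_mor_append[OF p ne] es ds by simp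
  qed
qed

lemma sg_decomp:
  assumes "(v, w) \<in> sg (m @ n)"
  shows "\<exists>u. (v, u) \<in> sg n \<and> (u, w) \<in> sg m"
proof (cases "m @ n = []")
  case True then show ?thesis using assms by (auto simp: sigma_mono_def is_path_def)
next
  case False
  then obtain es where es: "is_path E s t es" "map l es = m @ n" "s (last es) = v" "t (hd es) = w"
    using assms by (auto simp: sigma_mono_def)
  have vw: "v \<in> V" "w \<in> V" using sg_V[OF assms] by auto
  show ?thesis
  proof (cases "m = []")
    case True then show ?thesis using assms vw by (auto simp: sigma_mono_def)
  next
    case m: False
    show ?thesis
    proof (cases "n = []")
      case True then show ?thesis using assms vw by (auto simp: sigma_mono_def)
    next
      case n: False
      obtain us vs where uv: "es = us @ vs" "m = map l us" "n = map l vs"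
        using es(2) by (auto simp: map_eq_append_conv)
      have ne: "us \<noteq> []" "vs \<noteq> []" using uv m n by auto
      have sp: "is_path E s t us" "is_path E s t vs" "s (last us) = t (hd vs)"
        using is_path_split[of E s t us vs] es uv ne by auto
      have "(v, s (last us)) \<in> sg n" unfolding sigma_mono_def using sp uv es ne by auto
      moreover have "(s (last us), w) \<in> sg m" unfolding sigma_mono_def using sp uv es ne by auto
      ultimately show ?thesis by blast
    qed
  qed
qed

end

definition TT :: "('o, 'm, 'r::comm_ring_1, 'z) lcat_scheme \<Rightarrow> 'o \<Rightarrow> 'o \<Rightarrow> ('x list \<Rightarrow> 'm) \<Rightarrow> ('x, 'r) ncpoly \<Rightarrow> 'm" where
  "TT C A B P h = finprod (hg C A B) (\<lambda>m. lc_smult C A B (Poly_Mapping.lookup h m) (P m)) (Poly_Mapping.keys h)"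

context
  fixes C :: "('o, 'm, 'r::comm_ring_1, 'z) lcat_scheme" and A B :: 'o
  assumes RLC: "R_linear_category C"
begin

interpretation G: comm_group "hg C A B" by (rule hg_group[OF RLC])

lemma sm_finprod:
  assumes "g \<in> S \<rightarrow> lc_hom C A B"
  shows "lc_smult C A B r (finprod (hg C A B) g S) = finprod (hg C A B) (\<lambda>i. lc_smult C A B r (g i)) S"
  by (rule finprod_additive[OF hg_group[OF RLC] hg_group[OF RLC]])
     (use assms sm_closed[OF RLC] sm_add[OF RLC] in auto)

lemma TT_superset:
  assumes "finite S" "Poly_Mapping.keys h \<subseteq> S" "\<And>m. P m \<in> lc_hom C A B"
  shows "TT C A B P h = finprod (hg C A B) (\<lambda>m. lc_smult C A B (Poly_Mapping.lookup h m) (P m)) S"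
  unfolding TT_def
  by (rule G.finprod_mono_neutral_cong_left)
     (use assms zero_sm[OF RLC] sm_closed[OF RLC] in \<open>auto simp: in_keys_iff\<close>)

lemma TT_add:
  assumes "\<And>m. P m \<in> lc_hom C A B"
  shows "TT C A B P (h1 + h2) = lc_add C A B (TT C A B P h1) (TT C A B P h2)"
proof -
  let ?S = "Poly_Mapping.keys h1 \<union> Poly_Mapping.keys h2"
  have f: "finite ?S" by simp
  have "TT C A B P (h1 + h2) = finprod (hg C A B) (\<lambda>m. lc_smult C A B (Poly_Mapping.lookup (h1 + h2) m) (P m)) ?S"
    by (rule TT_superset[OF f keys_add assms])
  also have "\<dots> = finprod (hg C A B) (\<lambda>m. lc_add C A B (lc_smult C A B (Poly_Mapping.lookup h1 m) (P m))
      (lc_smult C A B (Poly_Mapping.lookup h2 m) (P m))) ?S"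
    by (simp add: lookup_add add_sm[OF RLC assms])
  also have "\<dots> = lc_add C A B (finprod (hg C A B) (\<lambda>m. lc_smult C A B (Poly_Mapping.lookup h1 m) (P m)) ?S)
      (finprod (hg C A B) (\<lambda>m. lc_smult C A B (Poly_Mapping.lookup h2 m) (P m)) ?S)"
    using G.finprod_multf[of "\<lambda>m. lc_smult C A B (Poly_Mapping.lookup h1 m) (P m)" ?S
        "\<lambda>m. lc_smult C A B (Poly_Mapping.lookup h2 m) (P m)"] sm_closed[OF RLC assms]
    by (auto simp: Pi_def)
  also have "\<dots> = lc_add C A B (TT C A B P h1) (TT C A B P h2)"
    using TT_superset[OF f _ assms, of h1] TT_superset[OF f _ assms, of h2] by simp
  finally show ?thesis .
qed

lemma fp_closed: "(\<And>i. i \<in> S \<Longrightarrow> g i \<in> lc_hom C A B) \<Longrightarrow> finprod (hg C A B) g S \<in> lc_hom C A B"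
  using G.finprod_closed[of g S] by auto

lemma add_zero_r: "x \<in> lc_hom C A B \<Longrightarrow> lc_add C A B x (lc_zero C A B) = x"
  using G.r_one[of x] by simp

lemma TT_closed: "(\<And>m. P m \<in> lc_hom C A B) \<Longrightarrow> TT C A B P h \<in> lc_hom C A B"
  unfolding TT_def by (rule fp_closed) (rule sm_closed[OF RLC], blast)

lemma TT_zero: "TT C A B P 0 = lc_zero C A B"
  unfolding TT_def by simp

lemma TT_single:
  assumes "\<And>m. P m \<in> lc_hom C A B"
  shows "TT C A B P (Poly_Mapping.single k r) = lc_smult C A B r (P k)"
proof (cases "r = 0")
  case True then show ?thesis using zero_sm[OF RLC assms] by (simp add: TT_def)
next
  case False then show ?thesis using sm_closed[OF RLC assms] add_zero_r
    by (simp add: TT_def G.finprod_singleton_swap lookup_single)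
qed

lemma TT_sum:
  assumes "\<And>m. P m \<in> lc_hom C A B"
  shows "TT C A B P (sum F I) = finprod (hg C A B) (\<lambda>i. TT C A B P (F i)) I"
proof (induction I rule: infinite_finite_induct)
  case (infinite I) then show ?case by (simp add: TT_zero)
next
  case empty then show ?case by (simp add: TT_zero)
next
  case (insert i I)
  have c: "TT C A B P (F j) \<in> lc_hom C A B" for j using TT_closed[of P, OF assms] .
  have "TT C A B P (sum F (insert i I)) = lc_add C A B (TT C A B P (F i)) (TT C A B P (sum F I))"
    using insert TT_add[of P, OF assms] by simp
  then show ?case using insert c by (simp add: Pi_def)
qed

lemma TT_double:
  assumes "\<And>m. P m \<in> lc_hom C A B" "finite I" "finite J"
  shows "TT C A B P (\<Sum>p\<in>I. \<Sum>n\<in>J. Poly_Mapping.single (k p n) (x p * y n)) =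
    finprod (hg C A B) (\<lambda>p. lc_smult C A B (x p)
       (finprod (hg C A B) (\<lambda>n. lc_smult C A B (y n) (P (k p n))) J)) I"
  unfolding TT_sum[of P, OF assms(1)] TT_single[of P, OF assms(1)]
proof (rule G.finprod_cong')
  show "(\<lambda>p. lc_smult C A B (x p) (finprod (hg C A B) (\<lambda>n. lc_smult C A B (y n) (P (k p n))) J))
      \<in> I \<rightarrow> carrier (hg C A B)"
    by (auto intro!: sm_closed[OF RLC] fp_closed assms(1))
  fix p assume "p \<in> I"
  have "finprod (hg C A B) (\<lambda>n. lc_smult C A B (x p * y n) (P (k p n))) J =
    finprod (hg C A B) (\<lambda>n. lc_smult C A B (x p) (lc_smult C A B (y n) (P (k p n)))) J"
    using mult_sm[OF RLC assms(1)] by simp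
  also have "\<dots> = lc_smult C A B (x p) (finprod (hg C A B) (\<lambda>n. lc_smult C A B (y n) (P (k p n))) J)"
    by (rule sm_finprod[symmetric]) (use sm_closed[OF RLC assms(1)] in auto)
  finally show "finprod (hg C A B) (\<lambda>n. lc_smult C A B (x p * y n) (P (k p n))) J =
    lc_smult C A B (x p) (finprod (hg C A B) (\<lambda>n. lc_smult C A B (y n) (P (k p n))) J)" .
qed simp

end

context qrep begin

definition Psi where
  "Psi v w m = (if (v, w) \<in> sg m then mr v w m else lc_zero C (Vo v) (Vo w))"

lemma Psi_hom: "Psi v w m \<in> lc_hom C (Vo v) (Vo w)"
  unfolding Psi_def using mr_hom zero_closed[OF RLC] by auto

lemma realization_fp:
  assumes "\<And>m. m \<in> Poly_Mapping.keys g \<Longrightarrow> (v, w) \<in> sg m"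
  shows "realization C E s t l Vo phi v w g =
    finprod (hg C (Vo v) (Vo w)) (\<lambda>m. lc_smult C (Vo v) (Vo w) (Poly_Mapping.lookup g m) (mr v w m)) (Poly_Mapping.keys g)"
  unfolding realization_def
  by (rule hom_sum_finprod[OF RLC]) (use sm_closed[OF RLC mr_hom] assms in auto)

lemma gen_case:
  assumes uc: "uniformly_compatible V E s t l g" and rv: "realizations_vanish C V E s t l Vo phi g"
  shows "TT C (Vo v) (Vo w) (\<lambda>m. Psi v w (a @ m @ b)) g = lc_zero C (Vo v) (Vo w)"
proof -
  interpret G: comm_group "hg C (Vo v) (Vo w)" by (rule hg_group[OF RLC])
  show ?thesis
  proof (cases "\<exists>m0\<in>Poly_Mapping.keys g. (v, w) \<in> sg (a @ m0 @ b)")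
    case False
    show ?thesis unfolding TT_def
    proof -
      have "finprod (hg C (Vo v) (Vo w)) (\<lambda>m. lc_smult C (Vo v) (Vo w) (Poly_Mapping.lookup g m) (Psi v w (a @ m @ b)))
          (Poly_Mapping.keys g) = \<one>\<^bsub>hg C (Vo v) (Vo w)\<^esub>"
        by (rule G.finprod_one_eqI) (use False in \<open>simp add: Psi_def sm_zero[OF RLC]\<close>)
      then show "finprod (hg C (Vo v) (Vo w)) (\<lambda>m. lc_smult C (Vo v) (Vo w) (Poly_Mapping.lookup g m) (Psi v w (a @ m @ b)))
          (Poly_Mapping.keys g) = lc_zero C (Vo v) (Vo w)" by simp
    qed
  next
    case True
    then obtain m0 where m0: "m0 \<in> Poly_Mapping.keys g" "(v, w) \<in> sg (a @ m0 @ b)" by blast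
    obtain u2 where u2: "(v, u2) \<in> sg (m0 @ b)" "(u2, w) \<in> sg a" using sg_decomp[OF m0(2)] by blast
    obtain u1 where u1: "(v, u1) \<in> sg b" "(u1, u2) \<in> sg m0" using sg_decomp[OF u2(1)] by blast
    have sgm: "(u1, u2) \<in> sg m" if "m \<in> Poly_Mapping.keys g" for m
      using uc m0(1) that u1(2) unfolding uniformly_compatible_def by metis
    have "(u1, u2) \<in> sigma V E s t l g"
      unfolding sigma_def using sgm sg_V[OF u1(2)] by auto
    then have RZ: "realization C E s t l Vo phi u1 u2 g = lc_zero C (Vo u1) (Vo u2)"
      using rv unfolding realizations_vanish_def by auto
    define Am where "Am = mr u2 w a"
    define Bm where "Bm = mr v u1 b"
    have Am: "Am \<in> lc_hom C (Vo u2) (Vo w)" unfolding Am_def by (rule mr_hom[OF u2(2)])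
    have Bm: "Bm \<in> lc_hom C (Vo v) (Vo u1)" unfolding Bm_def by (rule mr_hom[OF u1(1)])
    define L where "L x = lc_cmp C (Vo v) (Vo u2) (Vo w) Am (lc_cmp C (Vo v) (Vo u1) (Vo u2) x Bm)" for x
    have Lc: "L x \<in> lc_hom C (Vo v) (Vo w)" if "x \<in> lc_hom C (Vo u1) (Vo u2)" for x
      unfolding L_def by (intro cmp_closed[OF RLC] that Am Bm)
    have Ladd: "L (lc_add C (Vo u1) (Vo u2) x y) = lc_add C (Vo v) (Vo w) (L x) (L y)"
      if "x \<in> lc_hom C (Vo u1) (Vo u2)" "y \<in> lc_hom C (Vo u1) (Vo u2)" for x y
      unfolding L_def
      by (simp add: cmp_add_l[OF RLC Bm that] cmp_add_r[OF RLC cmp_closed[OF RLC Bm that(1)] cmp_closed[OF RLC Bm that(2)] Am])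
    have Lsm: "L (lc_smult C (Vo u1) (Vo u2) r x) = lc_smult C (Vo v) (Vo w) r (L x)"
      if "x \<in> lc_hom C (Vo u1) (Vo u2)" for x r
      unfolding L_def
      by (simp add: cmp_sm_l[OF RLC Bm that] cmp_sm_r[OF RLC cmp_closed[OF RLC Bm that] Am])
    have Lfp: "L (finprod (hg C (Vo u1) (Vo u2)) f S) = finprod (hg C (Vo v) (Vo w)) (\<lambda>i. L (f i)) S"
      if "f \<in> S \<rightarrow> lc_hom C (Vo u1) (Vo u2)" for f S
      by (rule finprod_additive[OF hg_group[OF RLC] hg_group[OF RLC]]) (use Lc Ladd that in auto)
    have L0: "L (lc_zero C (Vo u1) (Vo u2)) = lc_zero C (Vo v) (Vo w)"
      using Lfp[of "\<lambda>x. x" "{}"] hg_group[OF RLC, of "Vo u1" "Vo u2"]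
      by (simp add: comm_group_def comm_monoid.finprod_empty group_def)
    have eq: "Psi v w (a @ m @ b) = L (mr u1 u2 m)" if "m \<in> Poly_Mapping.keys g" for m
    proof -
      have c1: "(v, u2) \<in> sg (m @ b) \<and> mr v u2 (m @ b) = lc_cmp C (Vo v) (Vo u1) (Vo u2) (mr u1 u2 m) (mr v u1 b)"
        by (rule sg_comp[OF u1(1) sgm[OF that]])
      have c2: "(v, w) \<in> sg (a @ m @ b) \<and> mr v w (a @ m @ b) = lc_cmp C (Vo v) (Vo u2) (Vo w) (mr u2 w a) (mr v u2 (m @ b))"
        by (rule sg_comp[OF conjunct1[OF c1] u2(2)])
      show ?thesis using c1 c2 unfolding Psi_def L_def Am_def Bm_def by simp
    qed
    have "TT C (Vo v) (Vo w) (\<lambda>m. Psi v w (a @ m @ b)) g =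
      finprod (hg C (Vo v) (Vo w)) (\<lambda>m. L (lc_smult C (Vo u1) (Vo u2) (Poly_Mapping.lookup g m) (mr u1 u2 m))) (Poly_Mapping.keys g)"
      unfolding TT_def
      by (rule G.finprod_cong') (auto simp: eq Lsm mr_hom sgm intro!: sm_closed[OF RLC] Lc mr_hom sgm)
    also have "\<dots> = L (finprod (hg C (Vo u1) (Vo u2)) (\<lambda>m. lc_smult C (Vo u1) (Vo u2) (Poly_Mapping.lookup g m) (mr u1 u2 m))
        (Poly_Mapping.keys g))"
      by (rule Lfp[symmetric]) (use sm_closed[OF RLC mr_hom] sgm in auto)
    also have "\<dots> = L (realization C E s t l Vo phi u1 u2 g)"
      using realization_fp[of g u1 u2] sgm by simp
    also have "\<dots> = lc_zero C (Vo v) (Vo w)" using RZ L0 by simp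
    finally show ?thesis .
  qed
qed

lemma ideal_TT:
  assumes "h \<in> nc_ideal F"
    and FF: "\<forall>g\<in>F. uniformly_compatible V E s t l g \<and> realizations_vanish C V E s t l Vo phi g"
  shows "\<forall>a b v w. TT C (Vo v) (Vo w) (\<lambda>m. Psi v w (a @ m @ b)) h = lc_zero C (Vo v) (Vo w)"
  using assms(1)
proof induction
  case (gen f)
  then show ?case using FF gen_case by blast
next
  case zero
  then show ?case by (simp add: TT_zero[OF RLC])
next
  case (add f g)
  show ?case
  proof (intro allI)
    fix a b v w
    have "TT C (Vo v) (Vo w) (\<lambda>m. Psi v w (a @ m @ b)) (f + g) =
      lc_add C (Vo v) (Vo w) (TT C (Vo v) (Vo w) (\<lambda>m. Psi v w (a @ m @ b)) f) (TT C (Vo v) (Vo w) (\<lambda>m. Psi v w (a @ m @ b)) g)"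
      by (rule TT_add[OF RLC]) (rule Psi_hom)
    then show "TT C (Vo v) (Vo w) (\<lambda>m. Psi v w (a @ m @ b)) (f + g) = lc_zero C (Vo v) (Vo w)"
      using add.IH hm(6)[OF RLC zero_closed[OF RLC]] by simp
  qed
next
  case (lmult f c)
  show ?case
  proof (intro allI)
    fix a b v w
    interpret G: comm_group "hg C (Vo v) (Vo w)" by (rule hg_group[OF RLC])
    have "TT C (Vo v) (Vo w) (\<lambda>m. Psi v w (a @ m @ b)) (nc_mult c f) =
      finprod (hg C (Vo v) (Vo w)) (\<lambda>p. lc_smult C (Vo v) (Vo w) (Poly_Mapping.lookup c p)
       (finprod (hg C (Vo v) (Vo w)) (\<lambda>n. lc_smult C (Vo v) (Vo w) (Poly_Mapping.lookup f n) (Psi v w (a @ (p @ n) @ b)))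
          (Poly_Mapping.keys f))) (Poly_Mapping.keys c)"
      unfolding nc_mult_def by (rule TT_double[OF RLC Psi_hom]) simp_all
    also have "\<dots> = finprod (hg C (Vo v) (Vo w)) (\<lambda>p. \<one>\<^bsub>hg C (Vo v) (Vo w)\<^esub>) (Poly_Mapping.keys c)"
    proof (rule G.finprod_cong')
      fix p
      have "finprod (hg C (Vo v) (Vo w)) (\<lambda>n. lc_smult C (Vo v) (Vo w) (Poly_Mapping.lookup f n) (Psi v w (a @ (p @ n) @ b)))
          (Poly_Mapping.keys f) = TT C (Vo v) (Vo w) (\<lambda>m. Psi v w ((a @ p) @ m @ b)) f"
        unfolding TT_def by simp
      then show "lc_smult C (Vo v) (Vo w) (Poly_Mapping.lookup c p)
       (finprod (hg C (Vo v) (Vo w)) (\<lambda>n. lc_smult C (Vo v) (Vo w) (Poly_Mapping.lookup f n) (Psi v w (a @ (p @ n) @ b)))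
          (Poly_Mapping.keys f)) = \<one>\<^bsub>hg C (Vo v) (Vo w)\<^esub>"
        using lmult.IH[THEN spec[of _ "a @ p"], THEN spec[of _ b], THEN spec[of _ v], THEN spec[of _ w]] sm_zero[OF RLC] by simp
    qed (auto simp: zero_closed[OF RLC])
    also have "\<dots> = lc_zero C (Vo v) (Vo w)" using G.finprod_one[of "Poly_Mapping.keys c"] by (simp only: hg_simps)
    finally show "TT C (Vo v) (Vo w) (\<lambda>m. Psi v w (a @ m @ b)) (nc_mult c f) = lc_zero C (Vo v) (Vo w)" .
  qed
next
  case (rmult f c)
  show ?case
  proof (intro allI)
    fix a b v w
    interpret G: comm_group "hg C (Vo v) (Vo w)" by (rule hg_group[OF RLC])
    have nm: "nc_mult f c = (\<Sum>p\<in>Poly_Mapping.keys c. \<Sum>n\<in>Poly_Mapping.keys f.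
        Poly_Mapping.single (n @ p) (Poly_Mapping.lookup c p * Poly_Mapping.lookup f n))"
      unfolding nc_mult_def by (subst sum.swap) (simp add: mult.commute)
    have "TT C (Vo v) (Vo w) (\<lambda>m. Psi v w (a @ m @ b)) (nc_mult f c) =
      finprod (hg C (Vo v) (Vo w)) (\<lambda>p. lc_smult C (Vo v) (Vo w) (Poly_Mapping.lookup c p)
       (finprod (hg C (Vo v) (Vo w)) (\<lambda>n. lc_smult C (Vo v) (Vo w) (Poly_Mapping.lookup f n) (Psi v w (a @ (n @ p) @ b)))
          (Poly_Mapping.keys f))) (Poly_Mapping.keys c)"
      unfolding nm by (rule TT_double[OF RLC Psi_hom]) simp_all
    also have "\<dots> = finprod (hg C (Vo v) (Vo w)) (\<lambda>p. \<one>\<^bsub>hg C (Vo v) (Vo w)\<^esub>) (Poly_Mapping.keys c)"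
    proof (rule G.finprod_cong')
      fix p
      have "finprod (hg C (Vo v) (Vo w)) (\<lambda>n. lc_smult C (Vo v) (Vo w) (Poly_Mapping.lookup f n) (Psi v w (a @ (n @ p) @ b)))
          (Poly_Mapping.keys f) = TT C (Vo v) (Vo w) (\<lambda>m. Psi v w (a @ m @ (p @ b))) f"
        unfolding TT_def by simp
      then show "lc_smult C (Vo v) (Vo w) (Poly_Mapping.lookup c p)
       (finprod (hg C (Vo v) (Vo w)) (\<lambda>n. lc_smult C (Vo v) (Vo w) (Poly_Mapping.lookup f n) (Psi v w (a @ (n @ p) @ b)))
          (Poly_Mapping.keys f)) = \<one>\<^bsub>hg C (Vo v) (Vo w)\<^esub>"
        using rmult.IH[THEN spec[of _ a], THEN spec[of _ "p @ b"], THEN spec[of _ v], THEN spec[of _ w]] sm_zero[OF RLC] by simp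
    qed (auto simp: zero_closed[OF RLC])
    also have "\<dots> = lc_zero C (Vo v) (Vo w)" using G.finprod_one[of "Poly_Mapping.keys c"] by (simp only: hg_simps)
    finally show "TT C (Vo v) (Vo w) (\<lambda>m. Psi v w (a @ m @ b)) (nc_mult f c) = lc_zero C (Vo v) (Vo w)" .
  qed
qed

lemma final:
  assumes "f \<in> nc_ideal F"
    and FF: "\<forall>g\<in>F. uniformly_compatible V E s t l g \<and> realizations_vanish C V E s t l Vo phi g"
  shows "realizations_vanish C V E s t l Vo phi f"
  unfolding realizations_vanish_def
proof (intro ballI, clarify)
  fix v w assume vw: "(v, w) \<in> sigma V E s t l f"
  have sgm: "(v, w) \<in> sg m" if "m \<in> Poly_Mapping.keys f" for m
    using vw that unfolding sigma_def by auto
  interpret G: comm_group "hg C (Vo v) (Vo w)" by (rule hg_group[OF RLC])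
  have r: "realization C E s t l Vo phi v w f =
    finprod (hg C (Vo v) (Vo w)) (\<lambda>m. lc_smult C (Vo v) (Vo w) (Poly_Mapping.lookup f m) (mr v w m)) (Poly_Mapping.keys f)"
    by (rule realization_fp) (rule sgm)
  have "realization C E s t l Vo phi v w f = TT C (Vo v) (Vo w) (\<lambda>m. Psi v w ([] @ m @ [])) f"
    unfolding r TT_def
    by (rule G.finprod_cong') (auto simp: Psi_def sgm intro!: sm_closed[OF RLC] mr_hom sgm)
  also have "\<dots> = lc_zero C (Vo v) (Vo w)" using ideal_TT[OF assms] by blast
  finally show "realization C E s t l Vo phi v w f = lc_zero C (Vo v) (Vo w)" .
qed

end

theorem theorem5p14:
  fixes F :: "('x, 'r::comm_ring_1) ncpoly set"
    and f :: "('x, 'r) ncpoly"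
    and V :: "'v set" and E :: "'e set" and s t :: "'e \<Rightarrow> 'v" and l :: "'e \<Rightarrow> 'x"
  assumes "f \<in> nc_ideal F"
    and "quiver V E s t"
    and "compatible V E s t l f"
    and "\<forall>g\<in>F. uniformly_compatible V E s t l g"
  shows "\<forall>(C :: ('o, 'm, 'r) lcat) (Vo :: 'v \<Rightarrow> 'o) (phi :: 'e \<Rightarrow> 'm).
           R_linear_category C \<longrightarrow> representation C V E s t Vo phi \<longrightarrow>
           consistent C E s t l Vo phi \<longrightarrow>
           (\<forall>g\<in>F. realizations_vanish C V E s t l Vo phi g) \<longrightarrow>
           realizations_vanish C V E s t l Vo phi f"
proof (intro allI impI)
  fix C :: "('o, 'm, 'r) lcat" and Vo :: "'v \<Rightarrow> 'o" and phi :: "'e \<Rightarrow> 'm"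
  assume a1: "R_linear_category C" and a2: "representation C V E s t Vo phi"
    and a3: "consistent C E s t l Vo phi" and a4: "\<forall>g\<in>F. realizations_vanish C V E s t l Vo phi g"
  interpret qrep C V E s t l Vo phi
    using a1 a2 a3 assms(2) by unfold_locales
  show "realizations_vanish C V E s t l Vo phi f"
    by (rule final[OF assms(1)]) (use a4 assms(4) in blast)
qed

end
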